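(* Let $X_1,\dots,X_n$ ($n\ge 1$) and $Y$ be jointly distributed discrete random variables, $\mathbf X=(X_1,\dots,X_n)$, and let $\Pi$ be any partial information decomposition (as defined in the context). Then $$\mathrm{DRSI}(\mathbf X;Y)=I(\mathbf X;Y)-\sum_{j=1}^n I(X_j;Y\mid \mathbf X_{-j}),$$ where $\mathbf X_{-j}$ denotes the collection of all sources except $X_j$. In particular, $\mathrm{DRSI}$ takes the same value for every partial information decomposition and depends only on Shannon entropies.
   Context: Notation: $[n]=\{1,\dots,n\}$. For $\mathbf a\subseteq[n]$, $X_{\mathbf a}=(X_i)_{i\in\mathbf a}$ (with $X_\emptyset$ a constant), and $\mathbf X_{-j}=X_{[n]\setminus\{j\}}$. Antichains: $\mathcal A_n$ is the set of all nonempty collections $\alpha$ of nonempty subsets of $[n]$ such that no element of $\alpha$ is a proper subset of another element of $\alpha$. Partial information decomposition (PID): any function $\Pi:\mathcal A_n\to\mathbb R$ satisfying, for every nonempty $\mathbf a\subseteq[n]$, $$I(X_{\mathbf a};Y)=\sum_{\alpha\in\mathcal A_n:\ \exists \mathbf b\in\alpha,\ \mathbf b\subseteq \mathbf a}\Pi(\alpha).$$ Degree of vulnerability: $v(\alpha)=|\{i\in[n]: i\in\mathbf b\text{ for all }\mathbf b\in\alpha\}|$. $k$-vulnerable information: $I_{\mathrm v}^{(k)}(\mathbf X;Y)=\sum_{\alpha:\ v(\alpha)=k}\Pi(\alpha)$. Dual redundancy-synergy index: $\mathrm{DRSI}(\mathbf X;Y)=I_{\mathrm v}^{(0)}(\mathbf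 X;Y)-\sum_{k=2}^n (k-1)\,I_{\mathrm v}^{(k)}(\mathbf X;Y)$. *)

theory Defs
  imports "HOL-Probability.Probability"
begin

text \<open>Sub-collection of sources: X_a = (X_i)_{i in a}, as a random vector
  (a function on the index set a, undefined outside a).  X_{} is constant.\<close>
definition subvec :: "(nat \<Rightarrow> 'w \<Rightarrow> 'x) \<Rightarrow> nat set \<Rightarrow> 'w \<Rightarrow> (nat \<Rightarrow> 'x)" where
  "subvec X a = (\<lambda>w. restrict (\<lambda>i. X i w) a)"

definition antichains :: "nat \<Rightarrow> nat set set set" where
  "antichains n = {\<alpha>. \<alpha> \<noteq> {} \<and> (\<forall>b\<in>\<alpha>. b \<noteq> {} \<and> b \<subseteq> {1..n})
                       \<and> (\<forall>b\<in>\<alpha>. \<forall>c\<in>\<alpha>. \<not> b \<subset> c)}"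

definition MI :: "'w measure \<Rightarrow> real \<Rightarrow> (nat \<Rightarrow> 'w \<Rightarrow> 'x) \<Rightarrow> ('w \<Rightarrow> 'y) \<Rightarrow> nat set \<Rightarrow> real" where
  "MI M b X Y a = prob_space.mutual_information M b (count_space (subvec X a ` space M))
      (count_space (Y ` space M)) (subvec X a) Y"

definition CMI :: "'w measure \<Rightarrow> real \<Rightarrow> nat \<Rightarrow> (nat \<Rightarrow> 'w \<Rightarrow> 'x) \<Rightarrow> ('w \<Rightarrow> 'y) \<Rightarrow> nat \<Rightarrow> real" where
  "CMI M b n X Y j = prob_space.conditional_mutual_information M b
      (count_space (X j ` space M)) (count_space (Y ` space M))
      (count_space (subvec X ({1..n} - {j}) ` space M))
      (X j) Y (subvec X ({1..n} - {j}))"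

definition is_PID :: "'w measure \<Rightarrow> real \<Rightarrow> nat \<Rightarrow> (nat \<Rightarrow> 'w \<Rightarrow> 'x) \<Rightarrow> ('w \<Rightarrow> 'y)
    \<Rightarrow> (nat set set \<Rightarrow> real) \<Rightarrow> bool" where
  "is_PID M b n X Y Pd \<longleftrightarrow>
     (\<forall>a. a \<noteq> {} \<and> a \<subseteq> {1..n} \<longrightarrow>
        MI M b X Y a = (\<Sum>\<alpha>\<in>{\<alpha>\<in>antichains n. \<exists>c\<in>\<alpha>. c \<subseteq> a}. Pd \<alpha>))"

definition vuln :: "nat \<Rightarrow> nat set set \<Rightarrow> nat" where
  "vuln n \<alpha> = card {i\<in>{1..n}. \<forall>c\<in>\<alpha>. i \<in> c}"

definition vuln_info :: "nat \<Rightarrow> (nat set set \<Rightarrow> real) \<Rightarrow> nat \<Rightarrow> real" where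
  "vuln_info n Pd k = (\<Sum>\<alpha>\<in>{\<alpha>\<in>antichains n. vuln n \<alpha> = k}. Pd \<alpha>)"

definition DRSI :: "nat \<Rightarrow> (nat set set \<Rightarrow> real) \<Rightarrow> real" where
  "DRSI n Pd = vuln_info n Pd 0 - (\<Sum>k=2..n. (real k - 1) * vuln_info n Pd k)"

end

theory Submission
  imports Defs
begin

definition Pm :: "'w measure \<Rightarrow> ('w \<Rightarrow> 'a) \<Rightarrow> 'a \<Rightarrow> real" where
  "Pm M Z x = measure M (Z -` {x} \<inter> space M)"

definition Hs :: "'w measure \<Rightarrow> real \<Rightarrow> ('w \<Rightarrow> 'a) \<Rightarrow> real" where
  "Hs M b Z = - (\<Sum>x\<in>Z`space M. Pm M Z x * log b (Pm M Z x))"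

context information_space
begin

lemma marg:
  assumes Z: "simple_function M Z"
  shows "Pm M (\<lambda>w. g (Z w)) x = (\<Sum>z\<in>{z\<in>Z`space M. g z = x}. Pm M Z z)"
proof -
  have fin: "finite (Z`space M)" using Z by (simp add: simple_functionD)
  have "(\<lambda>w. g (Z w)) -` {x} \<inter> space M = (\<Union>z\<in>{z\<in>Z`space M. g z = x}. Z -` {z} \<inter> space M)"
    by auto
  moreover have "measure M (\<Union>z\<in>{z\<in>Z`space M. g z = x}. Z -` {z} \<inter> space M)
      = (\<Sum>z\<in>{z\<in>Z`space M. g z = x}. measure M (Z -` {z} \<inter> space M))"
    using fin Z by (intro finite_measure_finite_Union) (auto simp: disjoint_family_on_def simple_functionD)
  ultimately show ?thesis by (simp add: Pm_def)
qed

lemma push: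
  assumes Z: "simple_function M Z"
  shows "(\<Sum>z\<in>Z`space M. Pm M Z z * h (g z)) = (\<Sum>x\<in>(\<lambda>w. g (Z w))`space M. Pm M (\<lambda>w. g (Z w)) x * h x)"
proof -
  have fin: "finite (Z`space M)" using Z by (simp add: simple_functionD)
  have "(\<Sum>x\<in>(\<lambda>w. g (Z w))`space M. Pm M (\<lambda>w. g (Z w)) x * h x)
     = (\<Sum>x\<in>(\<lambda>w. g (Z w))`space M. (\<Sum>z\<in>{z\<in>Z`space M. g z = x}. Pm M Z z * h (g z)))"
    by (auto simp: marg[OF Z] sum_distrib_right intro!: sum.cong)
  also have "\<dots> = (\<Sum>z\<in>Z`space M. Pm M Z z * h (g z))"
  proof -
    have "(\<lambda>w. g (Z w))`space M = g`(Z`space M)" by auto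
    then show ?thesis using fin by (intro sum.group) auto
  qed
  finally show ?thesis by simp
qed

lemma Hs_inj:
  assumes Z: "simple_function M Z" and inj: "inj_on g (Z`space M)"
  shows "Hs M b (\<lambda>w. g (Z w)) = Hs M b Z"
proof -
  have eq: "Pm M (\<lambda>w. g (Z w)) (g z) = Pm M Z z" if "z \<in> Z`space M" for z
  proof -
    have "(\<lambda>w. g (Z w)) -` {g z} \<inter> space M = Z -` {z} \<inter> space M"
      using inj that by (auto simp: inj_on_def)
    then show ?thesis by (simp add: Pm_def)
  qed
  have img: "(\<lambda>w. g (Z w))`space M = g ` (Z ` space M)" by auto
  show ?thesis unfolding Hs_def img
    by (subst sum.reindex[OF inj]) (simp add: eq)
qed

lemma Pm_nonneg: "0 \<le> Pm M Z x" by (simp add: Pm_def)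

lemma MI_Hs:
  assumes A: "simple_function M A" and B: "simple_function M B"
    and SA: "finite SA" "A`space M \<subseteq> SA" and SB: "finite SB" "B`space M \<subseteq> SB"
  shows "mutual_information b (count_space SA) (count_space SB) A B
     = Hs M b A + Hs M b B - Hs M b (\<lambda>w. (A w, B w))"
proof -
  define AB where "AB = (\<lambda>w. (A w, B w))"
  have AB: "simple_function M AB" unfolding AB_def using A B by (rule simple_function_Pair)
  define PA where "PA x = (if x \<in> A`space M then Pm M A x else 0)" for x
  define PB where "PB x = (if x \<in> B`space M then Pm M B x else 0)" for x
  define PAB where "PAB x = (if x \<in> AB`space M then Pm M AB x else 0)" for x
  have dA: "distributed M (count_space SA) A PA"
    unfolding PA_def using A SA by (intro distributed_simple_function_superset) (auto simp: Pm_def)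
  have dB: "distributed M (count_space SB) B PB"
    unfolding PB_def using B SB by (intro distributed_simple_function_superset) (auto simp: Pm_def)
  have cs: "count_space SA \<Otimes>\<^sub>M count_space SB = count_space (SA \<times> SB)"
    using SA SB by (simp add: pair_measure_count_space)
  have ABsub: "AB`space M \<subseteq> SA \<times> SB" using SA SB by (auto simp: AB_def)
  have dAB: "distributed M (count_space SA \<Otimes>\<^sub>M count_space SB) AB PAB"
    unfolding PAB_def cs using AB ABsub SA SB by (intro distributed_simple_function_superset) (auto simp: Pm_def)
  have "mutual_information b (count_space SA) (count_space SB) A B
     = (\<integral>z. PAB z * log b (PAB z / (PA (fst z) * PB (snd z))) \<partial>(count_space SA \<Otimes>\<^sub>M count_space SB))"
    by (rule mutual_information_distr[OF _ _ dA _ dB _ dAB[unfolded AB_def]])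
      (auto simp: sigma_finite_measure_count_space_finite SA SB PA_def PB_def PAB_def Pm_nonneg)
  also have "\<dots> = (\<Sum>z\<in>SA \<times> SB. PAB z * log b (PAB z / (PA (fst z) * PB (snd z))))"
    unfolding cs using SA SB by (simp add: lebesgue_integral_count_space_finite)
  also have "\<dots> = (\<Sum>z\<in>AB`space M. PAB z * log b (PAB z / (PA (fst z) * PB (snd z))))"
    using SA SB ABsub by (intro sum.mono_neutral_right) (auto simp: PAB_def)
  also have "\<dots> = (\<Sum>z\<in>AB`space M. Pm M AB z * log b (Pm M AB z)
       - Pm M AB z * log b (Pm M A (fst z)) - Pm M AB z * log b (Pm M B (snd z)))"
  proof (rule sum.cong[OF refl])
    fix z assume z: "z \<in> AB`space M"
    then have za: "fst z \<in> A`space M" and zb: "snd z \<in> B`space M" by (auto simp: AB_def)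
    show "PAB z * log b (PAB z / (PA (fst z) * PB (snd z))) = Pm M AB z * log b (Pm M AB z)
       - Pm M AB z * log b (Pm M A (fst z)) - Pm M AB z * log b (Pm M B (snd z))"
    proof (cases "Pm M AB z = 0")
      case True then show ?thesis using z by (simp add: PAB_def)
    next
      case False
      then have pos: "0 < Pm M AB z" using Pm_nonneg[of AB z] by linarith
      have "Pm M AB z \<le> Pm M A (fst z)"
        unfolding Pm_def using A AB
        by (intro finite_measure_mono) (auto simp: AB_def simple_functionD)
      then have pa: "0 < Pm M A (fst z)" using pos by linarith
      have "Pm M AB z \<le> Pm M B (snd z)"
        unfolding Pm_def using B AB
        by (intro finite_measure_mono) (auto simp: AB_def simple_functionD)
      then have pb: "0 < Pm M B (snd z)" using pos by linarith
      have "log b (Pm M AB z / (Pm M A (fst z) * Pm M B (snd z)))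
         = log b (Pm M AB z) - log b (Pm M A (fst z)) - log b (Pm M B (snd z))"
        using pos pa pb by (simp add: log_divide log_mult)
      moreover have "PAB z = Pm M AB z" "PA (fst z) = Pm M A (fst z)" "PB (snd z) = Pm M B (snd z)"
        using z za zb by (auto simp: PAB_def PA_def PB_def)
      ultimately show ?thesis by (simp only: right_diff_distrib)
    qed
  qed
  also have "\<dots> = (\<Sum>z\<in>AB`space M. Pm M AB z * log b (Pm M AB z))
       - (\<Sum>z\<in>AB`space M. Pm M AB z * log b (Pm M A (fst z)))
       - (\<Sum>z\<in>AB`space M. Pm M AB z * log b (Pm M B (snd z)))"
    by (simp add: sum_subtractf)
  also have "(\<Sum>z\<in>AB`space M. Pm M AB z * log b (Pm M A (fst z)))
     = (\<Sum>x\<in>A`space M. Pm M A x * log b (Pm M A x))"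
    using push[OF AB, of "\<lambda>x. log b (Pm M A x)" fst] by (simp add: AB_def)
  also have "(\<Sum>z\<in>AB`space M. Pm M AB z * log b (Pm M B (snd z)))
     = (\<Sum>x\<in>B`space M. Pm M B x * log b (Pm M B x))"
    using push[OF AB, of "\<lambda>x. log b (Pm M B x)" snd] by (simp add: AB_def)
  finally show ?thesis unfolding Hs_def AB_def by simp
qed


lemma sf_subvec:
  assumes "finite a" "\<And>i. i \<in> a \<Longrightarrow> simple_function M (X i)"
  shows "simple_function M (subvec X a)"
  using assms
proof (induction a rule: finite_induct)
  case empty
  have "subvec X {} = (\<lambda>w. (\<lambda>i. undefined))" by (simp add: subvec_def restrict_def fun_eq_iff)
  then show ?case by simp
next
  case (insert i a)
  have eq: "subvec X (insert i a) = (\<lambda>(x, g). g(i := x)) \<circ> (\<lambda>w. (X i w, subvec X a w))"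
    by (auto simp: subvec_def restrict_def fun_eq_iff)
  show ?case unfolding eq
    by (intro simple_function_compose simple_function_Pair) (use insert in auto)
qed

lemma fin_img: "simple_function M Z \<Longrightarrow> finite (Z`space M)"
  by (simp add: simple_functionD)

lemma MI_Hs': "simple_function M A \<Longrightarrow> simple_function M B \<Longrightarrow>
  mutual_information b (count_space (A`space M)) (count_space (B`space M)) A B
     = Hs M b A + Hs M b B - Hs M b (\<lambda>w. (A w, B w))"
  by (rule MI_Hs) (auto simp: fin_img)

lemma chain:
  assumes sX: "\<And>i. i \<in> {1..n} \<Longrightarrow> simple_function M (X i)"
    and sY: "simple_function M Y" and j: "j \<in> {1..n}"
  shows "CMI M b n X Y j = MI M b X Y {1..n} - MI M b X Y ({1..n} - {j})"
proof -
  define Z where "Z = subvec X ({1..n} - {j})"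
  define XX where "XX = subvec X {1..n}"
  have sZ: "simple_function M Z" unfolding Z_def by (rule sf_subvec) (use sX in auto)
  have sXX: "simple_function M XX" unfolding XX_def by (rule sf_subvec) (use sX in auto)
  have sXj: "simple_function M (X j)" using sX j by auto
  have cs: "count_space (Y`space M) \<Otimes>\<^sub>M count_space (Z`space M) = count_space (Y`space M \<times> Z`space M)"
    using sY sZ by (simp add: pair_measure_count_space fin_img)
  have "CMI M b n X Y j = mutual_information b (count_space (X j`space M)) (count_space (Y`space M \<times> Z`space M))
        (X j) (\<lambda>w. (Y w, Z w)) - mutual_information b (count_space (X j`space M)) (count_space (Z`space M)) (X j) Z"
    unfolding CMI_def conditional_mutual_information_def Z_def[symmetric] cs ..
  also have "\<dots> = Hs M b (X j) + Hs M b (\<lambda>w. (Y w, Z w)) - Hs M b (\<lambda>w. (X j w, (Y w, Z w)))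
     - (Hs M b (X j) + Hs M b Z - Hs M b (\<lambda>w. (X j w, Z w)))"
    using sXj sY sZ
    by (simp add: MI_Hs' MI_Hs fin_img simple_function_Pair image_subset_iff)
  finally have c: "CMI M b n X Y j = Hs M b (\<lambda>w. (Y w, Z w)) - Hs M b (\<lambda>w. (X j w, (Y w, Z w)))
     - Hs M b Z + Hs M b (\<lambda>w. (X j w, Z w))" by simp
  have m1: "MI M b X Y {1..n} = Hs M b XX + Hs M b Y - Hs M b (\<lambda>w. (XX w, Y w))"
    unfolding MI_def XX_def[symmetric] using sXX sY by (rule MI_Hs')
  have m2: "MI M b X Y ({1..n} - {j}) = Hs M b Z + Hs M b Y - Hs M b (\<lambda>w. (Z w, Y w))"
    unfolding MI_def Z_def[symmetric] using sZ sY by (rule MI_Hs')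
  have ext_eq: "g = h" if "g \<in> extensional {1..n}" "h \<in> extensional {1..n}" "g j = h j"
      "restrict g ({1..n} - {j}) = restrict h ({1..n} - {j})" for g h :: "nat \<Rightarrow> 'b"
  proof (rule ext)
    fix i
    show "g i = h i"
    proof (cases "i \<in> {1..n} - {j}")
      case True
      have "restrict g ({1..n} - {j}) i = restrict h ({1..n} - {j}) i" using that(4) by (rule fun_cong)
      then show ?thesis using True by (simp only: restrict_apply' )
    next
      case False
      show ?thesis
      proof (cases "i = j")
        case True then show ?thesis using that(3) by simp
      next
        case False
        then have "i \<notin> {1..n}" using \<open>i \<notin> {1..n} - {j}\<close> by blast
        then show ?thesis using that(1,2) by (simp add: extensional_def)
      qed
    qed
  qed
  have XXext: "XX w \<in> extensional {1..n}" for w by (simp add: XX_def subvec_def)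
  have h1: "Hs M b (\<lambda>w. (X j w, Z w)) = Hs M b XX"
  proof -
    have "Hs M b (\<lambda>w. (\<lambda>g. (g j, restrict g ({1..n} - {j}))) (XX w)) = Hs M b XX"
    proof (rule Hs_inj[OF sXX], rule inj_onI)
      fix g h assume g: "g \<in> XX`space M" and h: "h \<in> XX`space M"
        and e: "(g j, restrict g ({1..n} - {j})) = (h j, restrict h ({1..n} - {j}))"
      have ge: "g \<in> extensional {1..n}" and he: "h \<in> extensional {1..n}" using g h XXext by blast+
      have "g j = h j" "restrict g ({1..n} - {j}) = restrict h ({1..n} - {j})" using e by simp_all
      then show "g = h" by (rule ext_eq[OF ge he])
    qed
    moreover have "(\<lambda>w. (\<lambda>g. (g j, restrict g ({1..n} - {j}))) (XX w)) = (\<lambda>w. (X j w, Z w))"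
      using j by (auto simp: XX_def Z_def subvec_def fun_eq_iff restrict_def)
    ultimately show ?thesis by simp
  qed
  have h2: "Hs M b (\<lambda>w. (X j w, (Y w, Z w))) = Hs M b (\<lambda>w. (XX w, Y w))"
  proof -
    have "Hs M b (\<lambda>w. (\<lambda>(g, y). (g j, (y, restrict g ({1..n} - {j})))) (XX w, Y w)) = Hs M b (\<lambda>w. (XX w, Y w))"
    proof (rule Hs_inj[OF simple_function_Pair[OF sXX sY]], rule inj_onI)
      fix p q assume p: "p \<in> (\<lambda>w. (XX w, Y w))`space M" and q: "q \<in> (\<lambda>w. (XX w, Y w))`space M"
        and e: "(\<lambda>(g, y). (g j, (y, restrict g ({1..n} - {j})))) p = (\<lambda>(g, y). (g j, (y, restrict g ({1..n} - {j})))) q"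
      obtain g y where pg: "p = (g, y)" by force
      obtain h z where qh: "q = (h, z)" by force
      have "g \<in> extensional {1..n}" "h \<in> extensional {1..n}" using p q XXext pg qh by auto
      moreover have "g j = h j" "restrict g ({1..n} - {j}) = restrict h ({1..n} - {j})" "y = z"
        using e pg qh by simp_all
      ultimately show "p = q" using pg qh ext_eq by simp
    qed
    moreover have "(\<lambda>w. (\<lambda>(g, y). (g j, (y, restrict g ({1..n} - {j})))) (XX w, Y w)) = (\<lambda>w. (X j w, (Y w, Z w)))"
      using j by (auto simp: XX_def Z_def subvec_def fun_eq_iff restrict_def)
    ultimately show ?thesis by simp
  qed
  have h3: "Hs M b (\<lambda>w. (Y w, Z w)) = Hs M b (\<lambda>w. (Z w, Y w))"
  proof -
    have "Hs M b (\<lambda>w. (\<lambda>(z, y). (y, z)) (Z w, Y w)) = Hs M b (\<lambda>w. (Z w, Y w))"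
      by (rule Hs_inj[OF simple_function_Pair[OF sZ sY]]) (auto intro!: inj_onI)
    then show ?thesis by simp
  qed
  show ?thesis using c m1 m2 h1 h2 h3 by simp
qed

lemma MI_empty:
  assumes sY: "simple_function M Y"
  shows "MI M b X Y {} = 0"
proof -
  define Z where "Z = subvec X {}"
  have Zc: "Z = (\<lambda>w. (\<lambda>i. undefined))" by (simp add: Z_def subvec_def restrict_def fun_eq_iff)
  have sZ: "simple_function M Z" by (simp add: Zc)
  have m: "MI M b X Y {} = Hs M b Z + Hs M b Y - Hs M b (\<lambda>w. (Z w, Y w))"
    unfolding MI_def Z_def[symmetric] using sZ sY by (rule MI_Hs')
  have "Hs M b (\<lambda>w. (\<lambda>y. ((\<lambda>i. undefined), y)) (Y w)) = Hs M b Y"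
    by (rule Hs_inj[OF sY]) (auto intro!: inj_onI)
  then have h1: "Hs M b (\<lambda>w. (Z w, Y w)) = Hs M b Y" by (simp add: Zc)
  have ne: "space M \<noteq> {}" by (rule not_empty)
  have "Z`space M = {(\<lambda>i. undefined)}" using ne by (auto simp: Zc)
  moreover have "Pm M Z (\<lambda>i. undefined) = 1"
    by (simp add: Pm_def Zc prob_space)
  ultimately have "Hs M b Z = 0" by (simp add: Hs_def)
  then show ?thesis using m h1 by simp
qed

end

lemma finite_antichains: "finite (antichains n)"
proof -
  have "antichains n \<subseteq> Pow (Pow {1..n})" by (auto simp: antichains_def)
  then show ?thesis by (rule finite_subset) simp
qed

lemma vuln_le: "vuln n \<alpha> \<le> n"
proof -
  have "vuln n \<alpha> \<le> card {1..n}" unfolding vuln_def by (rule card_mono) auto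
  then show ?thesis by simp
qed

lemma card_compl_vuln:
  "real (card {j\<in>{1..n}. \<exists>c\<in>\<alpha>. j \<notin> c}) = real n - real (vuln n \<alpha>)"
proof -
  have e: "{j\<in>{1..n}. \<exists>c\<in>\<alpha>. j \<notin> c} = {1..n} - {i\<in>{1..n}. \<forall>c\<in>\<alpha>. i \<in> c}" by auto
  have "card ({1..n} - {i\<in>{1..n}. \<forall>c\<in>\<alpha>. i \<in> c}) = card {1..n} - card {i\<in>{1..n}. \<forall>c\<in>\<alpha>. i \<in> c}"
    by (rule card_Diff_subset) auto
  moreover have "card {i\<in>{1..n}. \<forall>c\<in>\<alpha>. i \<in> c} \<le> card {1..n}" by (rule card_mono) auto
  ultimately show ?thesis unfolding e vuln_def by (simp add: of_nat_diff)
qed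

lemma DRSI_eq:
  assumes "n \<ge> 1"
  shows "DRSI n Pd = (\<Sum>\<alpha>\<in>antichains n. Pd \<alpha> * (1 - real (vuln n \<alpha>)))"
proof -
  let ?A = "antichains n"
  have "(\<Sum>\<alpha>\<in>?A. Pd \<alpha> * (1 - real (vuln n \<alpha>)))
      = (\<Sum>k\<in>{0..n}. \<Sum>\<alpha>\<in>{\<alpha>\<in>?A. vuln n \<alpha> = k}. Pd \<alpha> * (1 - real (vuln n \<alpha>)))"
    by (rule sum.group[symmetric]) (auto simp: finite_antichains vuln_le)
  also have "\<dots> = (\<Sum>k\<in>{0..n}. (1 - real k) * vuln_info n Pd k)"
    unfolding vuln_info_def by (auto simp: sum_distrib_left mult.commute intro!: sum.cong)
  also have "{0..n} = insert 0 (insert 1 {2..n})" using assms by auto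
  also have "(\<Sum>k\<in>insert 0 (insert 1 {2..n}). (1 - real k) * vuln_info n Pd k)
      = vuln_info n Pd 0 + (\<Sum>k\<in>{2..n}. (1 - real k) * vuln_info n Pd k)"
    by simp
  also have "\<dots> = DRSI n Pd"
  proof -
    have "(\<Sum>k\<in>{2..n}. (1 - real k) * vuln_info n Pd k) = - (\<Sum>k\<in>{2..n}. (real k - 1) * vuln_info n Pd k)"
      by (simp add: sum_negf[symmetric] algebra_simps)
    then show ?thesis unfolding DRSI_def by simp
  qed
  finally show ?thesis by simp
qed


theorem proposition4:
  fixes M :: "'w measure" and b :: real and n :: nat
    and X :: "nat \<Rightarrow> 'w \<Rightarrow> 'x" and Y :: "'w \<Rightarrow> 'y"
    and Pd :: "nat set set \<Rightarrow> real"
  assumes "information_space M b"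
    and "n \<ge> 1"
    and "\<And>i. i \<in> {1..n} \<Longrightarrow> simple_function M (X i)"
    and "simple_function M Y"
    and "is_PID M b n X Y Pd"
  shows "DRSI n Pd = MI M b X Y {1..n} - (\<Sum>j=1..n. CMI M b n X Y j)"
proof -
  interpret information_space M b by fact
  let ?A = "antichains n"
  have fA: "finite ?A" by (rule finite_antichains)
  have PID: "MI M b X Y a = (\<Sum>\<alpha>\<in>{\<alpha>\<in>?A. \<exists>c\<in>\<alpha>. c \<subseteq> a}. Pd \<alpha>)" if "a \<noteq> {}" "a \<subseteq> {1..n}" for a
    using assms(5) that unfolding is_PID_def by blast
  have full: "MI M b X Y {1..n} = (\<Sum>\<alpha>\<in>?A. Pd \<alpha>)"
  proof -
    have "{\<alpha>\<in>?A. \<exists>c\<in>\<alpha>. c \<subseteq> {1..n}} = ?A" by (auto simp: antichains_def)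
    then show ?thesis using PID[of "{1..n}"] assms(2) by simp
  qed
  have drop: "MI M b X Y ({1..n} - {j}) = (\<Sum>\<alpha>\<in>?A. if \<exists>c\<in>\<alpha>. j \<notin> c then Pd \<alpha> else 0)"
    if j: "j \<in> {1..n}" for j
  proof (cases "{1..n} - {j} = {}")
    case True
    have "(\<exists>c\<in>\<alpha>. j \<notin> c) = False" if "\<alpha> \<in> ?A" for \<alpha>
    proof -
      have "c = {j}" if "c \<in> \<alpha>" for c
      proof -
        have "c \<noteq> {}" "c \<subseteq> {1..n}" using \<open>\<alpha> \<in> ?A\<close> that by (auto simp: antichains_def)
        moreover have "{1..n} \<subseteq> {j}" using True by blast
        ultimately show ?thesis by blast
      qed
      then show ?thesis by auto
    qed
    then have "(\<Sum>\<alpha>\<in>?A. if \<exists>c\<in>\<alpha>. j \<notin> c then Pd \<alpha> else 0) = 0" by simp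
    moreover have "MI M b X Y ({1..n} - {j}) = 0" unfolding True by (rule MI_empty[OF assms(4)])
    ultimately show ?thesis by simp
  next
    case False
    have "MI M b X Y ({1..n} - {j}) = (\<Sum>\<alpha>\<in>{\<alpha>\<in>?A. \<exists>c\<in>\<alpha>. c \<subseteq> {1..n} - {j}}. Pd \<alpha>)"
      using PID[of "{1..n} - {j}"] False by auto
    also have "{\<alpha>\<in>?A. \<exists>c\<in>\<alpha>. c \<subseteq> {1..n} - {j}} = {\<alpha>\<in>?A. \<exists>c\<in>\<alpha>. j \<notin> c}"
      by (auto simp: antichains_def)
    also have "(\<Sum>\<alpha>\<in>{\<alpha>\<in>?A. \<exists>c\<in>\<alpha>. j \<notin> c}. Pd \<alpha>) = (\<Sum>\<alpha>\<in>?A. if \<exists>c\<in>\<alpha>. j \<notin> c then Pd \<alpha> else 0)"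
      using fA by (rule sum.inter_filter)
    finally show ?thesis .
  qed
  have "(\<Sum>j=1..n. CMI M b n X Y j) = (\<Sum>j=1..n. MI M b X Y {1..n} - MI M b X Y ({1..n} - {j}))"
    using chain[OF assms(3,4)] by (intro sum.cong) auto
  also have "\<dots> = real n * MI M b X Y {1..n} - (\<Sum>j=1..n. MI M b X Y ({1..n} - {j}))"
    by (simp add: sum_subtractf)
  also have "(\<Sum>j=1..n. MI M b X Y ({1..n} - {j}))
      = (\<Sum>j=1..n. \<Sum>\<alpha>\<in>?A. if \<exists>c\<in>\<alpha>. j \<notin> c then Pd \<alpha> else 0)"
    using drop by (intro sum.cong) auto
  also have "\<dots> = (\<Sum>\<alpha>\<in>?A. \<Sum>j=1..n. if \<exists>c\<in>\<alpha>. j \<notin> c then Pd \<alpha> else 0)"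
    by (rule sum.swap)
  also have "\<dots> = (\<Sum>\<alpha>\<in>?A. Pd \<alpha> * (real n - real (vuln n \<alpha>)))"
  proof (rule sum.cong[OF refl])
    fix \<alpha>
    have "(\<Sum>j=1..n. if \<exists>c\<in>\<alpha>. j \<notin> c then Pd \<alpha> else 0) = (\<Sum>j\<in>{j\<in>{1..n}. \<exists>c\<in>\<alpha>. j \<notin> c}. Pd \<alpha>)"
      by (rule sum.inter_filter[symmetric]) simp
    also have "\<dots> = real (card {j\<in>{1..n}. \<exists>c\<in>\<alpha>. j \<notin> c}) * Pd \<alpha>" by (rule sum_constant)
    also have "\<dots> = (real n - real (vuln n \<alpha>)) * Pd \<alpha>" by (simp only: card_compl_vuln)
    also have "\<dots> = Pd \<alpha> * (real n - real (vuln n \<alpha>))" by (rule mult.commute)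
    finally show "(\<Sum>j=1..n. if \<exists>c\<in>\<alpha>. j \<notin> c then Pd \<alpha> else 0) = Pd \<alpha> * (real n - real (vuln n \<alpha>))" .
  qed
  finally have "MI M b X Y {1..n} - (\<Sum>j=1..n. CMI M b n X Y j)
      = (\<Sum>\<alpha>\<in>?A. Pd \<alpha>) - real n * (\<Sum>\<alpha>\<in>?A. Pd \<alpha>) + (\<Sum>\<alpha>\<in>?A. Pd \<alpha> * (real n - real (vuln n \<alpha>)))"
    using full by simp
  also have "\<dots> = (\<Sum>\<alpha>\<in>?A. Pd \<alpha> * (1 - real (vuln n \<alpha>)))"
  proof -
    have "(\<Sum>\<alpha>\<in>?A. Pd \<alpha>) - real n * (\<Sum>\<alpha>\<in>?A. Pd \<alpha>) + (\<Sum>\<alpha>\<in>?A. Pd \<alpha> * (real n - real (vuln n \<alpha>)))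
        = (\<Sum>\<alpha>\<in>?A. Pd \<alpha> - real n * Pd \<alpha> + Pd \<alpha> * (real n - real (vuln n \<alpha>)))"
      by (simp only: sum.distrib sum_subtractf sum_distrib_left)
    also have "\<dots> = (\<Sum>\<alpha>\<in>?A. Pd \<alpha> * (1 - real (vuln n \<alpha>)))"
      by (rule sum.cong) (simp_all add: algebra_simps)
    finally show ?thesis .
  qed
  also have "\<dots> = DRSI n Pd" using DRSI_eq[OF assms(2)] by simp
  finally show ?thesis by simp
qed

end
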